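(* Every connected graph $G$ with at least $2$ vertices has a connecting transition set of size $\tau(G)$, where $$\tau(G)=\sum_{C}\begin{cases}|C|-2 & \text{if } G[C] \text{ is connected},\\ |C|-1 & \text{otherwise},\end{cases}$$ the sum ranging over all co-connected components $C$ of $G$ with $|C|\ge 2$.
   Context: All graphs are finite, simple and undirected. $G[X]$ denotes the subgraph induced by $X\subseteq V(G)$. The complement $\bar G$ of $G$ has vertex set $V(G)$ and an edge $xy$ ($x\ne y$) iff $xy\notin E(G)$. A co-connected component of $G$ is (the vertex set of) a connected component of $\bar G$. A transition of a graph $G$ is an unordered pair $\{ab,bc\}$ of two distinct edges of $G$ sharing the vertex $b$ (so $a\neq c$); it is written $abc$. A walk in $G$ is a sequence $(v_1,\dots,v_k)$ of vertices with $v_iv_{i+1}\in E(G)$ for all $i\le k-1$; it leads from $v_1$ to $v_k$. For a set $T$ of transitions of $G$, a walk $(v_1,\dots,v_k)$ is $T$-compatible if for every $i\in[1,k-2]$, either $v_i=v_{i+2}$ or $v_iv_{i+1}v_{i+2}\in T$. The graph $G$ is $T$-connected, and $T$ is a connecting transition set of $G$, if for all vertices $u,v$ of $G$ there is a $T$-compatible walk leading from $u$ to $v$. *)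

theory Defs
  imports Main
begin

definition simple_graph :: "'a set \<Rightarrow> 'a set set \<Rightarrow> bool" where
  "simple_graph V E \<longleftrightarrow> finite V \<and>
     (\<forall>e\<in>E. \<exists>a b. e = {a, b} \<and> a \<noteq> b \<and> a \<in> V \<and> b \<in> V)"

definition adj :: "'a set set \<Rightarrow> 'a \<Rightarrow> 'a \<Rightarrow> bool" where
  "adj E x y \<longleftrightarrow> {x, y} \<in> E"

definition coadj :: "'a set set \<Rightarrow> 'a \<Rightarrow> 'a \<Rightarrow> bool" where
  "coadj E x y \<longleftrightarrow> x \<noteq> y \<and> {x, y} \<notin> E"

definition reach_in :: "'a set \<Rightarrow> ('a \<Rightarrow> 'a \<Rightarrow> bool) \<Rightarrow> ('a \<times> 'a) set" where
  "reach_in S R = {(x, y). x \<in> S \<and> y \<in> S \<and> R x y}\<^sup>*"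

definition connected_on :: "'a set \<Rightarrow> ('a \<Rightarrow> 'a \<Rightarrow> bool) \<Rightarrow> bool" where
  "connected_on S R \<longleftrightarrow> S \<noteq> {} \<and> (\<forall>x\<in>S. \<forall>y\<in>S. (x, y) \<in> reach_in S R)"

definition component :: "'a set \<Rightarrow> ('a \<Rightarrow> 'a \<Rightarrow> bool) \<Rightarrow> 'a \<Rightarrow> 'a set" where
  "component S R x = {y \<in> S. (x, y) \<in> reach_in S R}"

definition co_components :: "'a set \<Rightarrow> 'a set set \<Rightarrow> 'a set set" where
  "co_components V E = component V (coadj E) ` V"

definition tau :: "'a set \<Rightarrow> 'a set set \<Rightarrow> nat" where
  "tau V E = (\<Sum>C\<in>{C \<in> co_components V E. card C \<ge> 2}.
      (if connected_on C (adj E) then card C - 2 else card C - 1))"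

definition transitions :: "'a set set \<Rightarrow> 'a set set set" where
  "transitions E = {{{a, b}, {b, c}} | a b c. {a, b} \<in> E \<and> {b, c} \<in> E \<and> a \<noteq> c}"

definition is_walk :: "'a set set \<Rightarrow> 'a list \<Rightarrow> bool" where
  "is_walk E w \<longleftrightarrow> w \<noteq> [] \<and> (\<forall>i. Suc i < length w \<longrightarrow> {w ! i, w ! Suc i} \<in> E)"

definition T_compatible :: "'a set set set \<Rightarrow> 'a list \<Rightarrow> bool" where
  "T_compatible T w \<longleftrightarrow> (\<forall>i. i + 2 < length w \<longrightarrow>
      w ! i = w ! (i + 2) \<or> {{w ! i, w ! (i + 1)}, {w ! (i + 1), w ! (i + 2)}} \<in> T)"

definition T_connected :: "'a set \<Rightarrow> 'a set set \<Rightarrow> 'a set set set \<Rightarrow> bool" where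
  "T_connected V E T \<longleftrightarrow> (\<forall>u\<in>V. \<forall>v\<in>V. \<exists>w. is_walk E w \<and> T_compatible T w \<and>
      hd w = u \<and> last w = v)"

definition connecting_transition_set :: "'a set \<Rightarrow> 'a set set \<Rightarrow> 'a set set set \<Rightarrow> bool" where
  "connecting_transition_set V E T \<longleftrightarrow> T \<subseteq> transitions E \<and> T_connected V E T"

end

theory Submission imports Defs begin

inductive treach :: "'a set set \<Rightarrow> 'a set set set \<Rightarrow> 'a \<Rightarrow> 'a \<Rightarrow> 'a \<Rightarrow> 'a \<Rightarrow> bool"
  for E T p q where
  tr_refl: "treach E T p q p q"
| tr_step: "treach E T p q r s \<Longrightarrow> {s,t} \<in> E \<Longrightarrow> r = t \<or> {{r,s},{s,t}} \<in> T \<Longrightarrow> treach E T p q s t"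

lemma treach_trans: "treach E T r s u v \<Longrightarrow> treach E T p q r s \<Longrightarrow> treach E T p q u v"
  by (induction rule: treach.induct) (auto intro: tr_step)

lemma treach_mono: "treach E T p q r s \<Longrightarrow> T \<subseteq> T' \<Longrightarrow> treach E T' p q r s"
  by (induction rule: treach.induct) (auto intro: treach.intros)

lemma treach_walk:
  assumes "treach E T p q r s" "{p,q} \<in> E"
  shows "\<exists>w w'. is_walk E w \<and> T_compatible T w \<and> hd w = p \<and> w = w' @ [r,s]"
  using assms
proof (induction rule: treach.induct)
  case tr_refl
  then show ?case
    by (intro exI[of _ "[p,q]"] exI[of _ "[]"]) (auto simp: is_walk_def T_compatible_def less_Suc_eq)
next
  case (tr_step r s t)
  then obtain w w' where w: "is_walk E w" "T_compatible T w" "hd w = p" "w = w' @ [r,s]" by blast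
  have lw: "length w = length w' + 2" using w(4) by simp
  have e1: "w @ [t] = (w' @ [r]) @ [s, t]" using w(4) by simp
  have e2: "hd (w @ [t]) = p" using w(3,4) by (cases w') auto
  have e3: "is_walk E (w @ [t])"
      unfolding is_walk_def
    proof (intro conjI allI impI)
      show "w @ [t] \<noteq> []" by simp
      fix i assume i: "Suc i < length (w @ [t])"
      show "{(w @ [t]) ! i, (w @ [t]) ! Suc i} \<in> E"
      proof (cases "Suc i < length w")
        case True
        then show ?thesis using w(1) by (simp add: is_walk_def nth_append)
      next
        case False
        then have "i = length w' + 1" using i lw by simp
        then show ?thesis using w(4) tr_step(2) by (simp add: nth_append)
      qed
    qed
    have e4: "T_compatible T (w @ [t])"
      unfolding T_compatible_def
    proof (intro allI impI)
      fix i assume i: "i + 2 < length (w @ [t])"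
      show "(w @ [t]) ! i = (w @ [t]) ! (i + 2) \<or>
         {{(w @ [t]) ! i, (w @ [t]) ! (i + 1)}, {(w @ [t]) ! (i + 1), (w @ [t]) ! (i + 2)}} \<in> T"
      proof (cases "i + 2 < length w")
        case True
        then show ?thesis using w(2) by (simp add: T_compatible_def nth_append)
      next
        case False
        then have "i = length w'" using i lw by simp
        then show ?thesis using w(4) tr_step(3) by (simp add: nth_append)
      qed
    qed
  show ?case using e1 e2 e3 e4 by blast
qed

definition inside3 :: "'a set set \<Rightarrow> 'a set \<Rightarrow> 'a set set set \<Rightarrow> bool" where
  "inside3 E S T \<longleftrightarrow> (\<forall>t\<in>T. \<exists>a b c. t = {{a,b},{b,c}} \<and> {a,b}\<in>E \<and> {b,c}\<in>E \<and> a\<noteq>c \<and> a\<in>S \<and> b\<in>S \<and> c\<in>S)"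

definition ends :: "'a set set \<Rightarrow> 'a set \<Rightarrow> 'a set set set \<Rightarrow> bool" where
  "ends E S T \<longleftrightarrow> (\<forall>t\<in>T. \<exists>a b c. t = {{a,b},{b,c}} \<and> {a,b}\<in>E \<and> {b,c}\<in>E \<and> a\<noteq>c \<and> a\<in>S \<and> c\<in>S)"

definition hubin :: "'a set set \<Rightarrow> 'a set set set \<Rightarrow> 'a set \<Rightarrow> 'a set \<Rightarrow> bool" where
  "hubin E T A B \<longleftrightarrow> (\<exists>b1 b2. \<forall>y\<in>A. \<exists>q\<in>B. {y,q}\<in>E \<and> treach E T y q b1 b2 \<and> treach E T b1 b2 q y)"

lemma inside3_ends: "inside3 E S T \<Longrightarrow> ends E S T"
  unfolding inside3_def ends_def
proof (intro ballI)
  fix t assume "\<forall>t\<in>T. \<exists>a b c. t = {{a,b},{b,c}} \<and> {a,b}\<in>E \<and> {b,c}\<in>E \<and> a\<noteq>c \<and> a\<in>S \<and> b\<in>S \<and> c\<in>S" "t \<in> T"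
  then obtain a b c where "t = {{a,b},{b,c}}" "{a,b}\<in>E" "{b,c}\<in>E" "a\<noteq>c" "a\<in>S" "c\<in>S" by meson
  then show "\<exists>a b c. t = {{a,b},{b,c}} \<and> {a,b}\<in>E \<and> {b,c}\<in>E \<and> a\<noteq>c \<and> a\<in>S \<and> c\<in>S" by (intro exI[of _ a] exI[of _ b] exI[of _ c]) simp
qed

lemma ends_trans: "ends E S T \<Longrightarrow> T \<subseteq> transitions E"
  unfolding ends_def
proof (intro subsetI)
  fix t assume "\<forall>t\<in>T. \<exists>a b c. t = {{a,b},{b,c}} \<and> {a,b}\<in>E \<and> {b,c}\<in>E \<and> a\<noteq>c \<and> a\<in>S \<and> c\<in>S" "t \<in> T"
  then obtain a b c where "t = {{a,b},{b,c}}" "{a,b}\<in>E" "{b,c}\<in>E" "a\<noteq>c" by meson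
  then show "t \<in> transitions E" unfolding transitions_def mem_Collect_eq by (intro exI[of _ a] exI[of _ b] exI[of _ c]) simp
qed

lemma hubin_mono: "hubin E T A B \<Longrightarrow> B \<subseteq> B' \<Longrightarrow> hubin E T A B'"
  unfolding hubin_def by (meson subsetD)

lemma hub_walk:
  assumes "hubin E T A B" "x \<in> A" "y \<in> A" "T \<subseteq> T'"
  shows "\<exists>w. is_walk E w \<and> T_compatible T' w \<and> hd w = x \<and> last w = y"
proof -
  obtain b1 b2 where h: "\<forall>y\<in>A. \<exists>q\<in>B. {y,q}\<in>E \<and> treach E T y q b1 b2 \<and> treach E T b1 b2 q y"
    using assms(1) unfolding hubin_def by meson
  obtain qx where qx: "{x,qx}\<in>E" "treach E T x qx b1 b2" using h assms(2) by meson
  obtain qy where qy: "treach E T b1 b2 qy y" using h assms(3) by meson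
  have "treach E T' x qx qy y" using treach_mono[OF treach_trans[OF qy qx(2)] assms(4)] .
  from treach_walk[OF this qx(1)] obtain w w' where "is_walk E w" "T_compatible T' w" "hd w = x" "w = w' @ [qy, y]"
    by blast
  then show ?thesis by (intro exI[of _ w]) simp
qed

lemma cross:
  assumes "(x,y) \<in> reach_in S R" "x \<in> A" "y \<notin> A"
  shows "\<exists>u v. u \<in> A \<and> v \<in> S \<and> v \<notin> A \<and> R u v"
proof -
  have "y \<notin> A \<longrightarrow> (\<exists>u v. u \<in> A \<and> v \<in> S \<and> v \<notin> A \<and> R u v)"
    using assms(1) unfolding reach_in_def
  proof (induction rule: rtrancl_induct)
    case base
    then show ?case using assms(2) by simp
  next
    case (step y z)
    then show ?case by auto
  qed
  then show ?thesis using assms(3) by simp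
qed

lemma grow:
  assumes fin: "finite S" and conn: "connected_on S (adj E)" and n: "2 \<le> n" and le: "n \<le> card S"
  shows "\<exists>S0 T. S0 \<subseteq> S \<and> card S0 = n \<and> inside3 E S0 T \<and> finite T \<and> card T = n - 2 \<and> hubin E T S0 S0"
  using n le
proof (induction n rule: dec_induct)
  case base
  from conn obtain x where x: "x \<in> S" unfolding connected_on_def by auto
  have "S - {x} \<noteq> {}"
  proof
    assume "S - {x} = {}"
    then have "S \<subseteq> {x}" by blast
    then have "card S \<le> 1" using card_mono[of "{x}" S] by simp
    then show False using base by simp
  qed
  then obtain y where y: "y \<in> S" "y \<noteq> x" by blast
  have "(x,y) \<in> reach_in S (adj E)" using conn x y unfolding connected_on_def by blast
  from cross[OF this, of "{x}"] y obtain v where v: "v \<in> S" "v \<noteq> x" "adj E x v" by blast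
  have e: "{x,v} \<in> E" "{v,x} \<in> E" using v(3) by (auto simp: adj_def insert_commute)
  have H: "\<forall>z\<in>{x,v}. \<exists>q\<in>{x,v}. {z,q}\<in>E \<and> treach E {} z q x v \<and> treach E {} x v q z"
  proof (intro ballI)
    fix z assume "z \<in> {x,v}"
    then show "\<exists>q\<in>{x,v}. {z,q}\<in>E \<and> treach E {} z q x v \<and> treach E {} x v q z"
    proof
      assume z: "z = x"
      have "treach E {} x v v x" by (rule tr_step[OF tr_refl]) (use e in auto)
      then show ?thesis using z e by (intro bexI[of _ v]) (auto intro: tr_refl)
    next
      assume "z \<in> {v}"
      then have z: "z = v" by simp
      have "treach E {} v x x v" by (rule tr_step[OF tr_refl]) (use e in auto)
      then show ?thesis using z e by (intro bexI[of _ x]) (auto intro: tr_refl)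
    qed
  qed
  then have "hubin E {} {x,v} {x,v}" unfolding hubin_def by (intro exI[of _ x] exI[of _ v])
  then show ?case using x v by (intro exI[of _ "{x,v}"] exI[of _ "{}"]) (auto simp: inside3_def)
next
  case (step m)
  from step(3)[OF Suc_leD[OF step(4)]] obtain S0 T where S0: "S0 \<subseteq> S" "card S0 = m" "inside3 E S0 T" "finite T" "card T = m - 2" "hubin E T S0 S0"
    by blast
  have "S0 \<noteq> S" using S0(2) step by auto
  then obtain y where y: "y \<in> S" "y \<notin> S0" using S0(1) by blast
  have "S0 \<noteq> {}" using S0(2) step by auto
  then obtain x where x: "x \<in> S0" by blast
  have "(x,y) \<in> reach_in S (adj E)" using conn x y S0(1) unfolding connected_on_def by blast
  from cross[OF this x y(2)] obtain u v where uv: "u \<in> S0" "v \<in> S" "v \<notin> S0" "adj E u v" by blast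
  have e: "{u,v} \<in> E" "{v,u} \<in> E" using uv(4) by (auto simp: adj_def insert_commute)
  obtain b1 b2 where h: "\<forall>y\<in>S0. \<exists>q\<in>S0. {y,q}\<in>E \<and> treach E T y q b1 b2 \<and> treach E T b1 b2 q y"
    using S0(6) unfolding hubin_def by meson
  then obtain q where q: "q \<in> S0" "{u,q} \<in> E" "treach E T u q b1 b2" "treach E T b1 b2 q u"
    using uv(1) by meson
  define t where "t = {{q,u},{u,v}}"
  define T' where "T' = insert t T"
  have qv: "q \<noteq> v" using q(1) uv(3) by auto
  have tnT: "t \<notin> T"
  proof
    assume "t \<in> T"
    then obtain a b c where "t = {{a,b},{b,c}}" "a\<in>S0" "b\<in>S0" "c\<in>S0"
      using S0(3) unfolding inside3_def by meson
    then have "\<Union>t = {a,b,c}" by auto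
    moreover have "v \<in> \<Union>t" unfolding t_def by simp
    ultimately have "v \<in> S0" using \<open>a\<in>S0\<close> \<open>b\<in>S0\<close> \<open>c\<in>S0\<close> by auto
    then show False using uv(3) by simp
  qed
  have fT': "finite T'" "card T' = Suc m - 2" using S0(4,5) tnT step(1) unfolding T'_def by auto
  have cS: "card (insert v S0) = Suc m"
    using S0(1,2) uv(3) fin by (simp add: finite_subset)
  have qu: "{q,u} \<in> E" using q(2) by (simp add: insert_commute)
  have ins: "inside3 E (insert v S0) T'"
    unfolding inside3_def T'_def
  proof (intro ballI)
    fix s assume "s \<in> insert t T"
    then show "\<exists>a b c. s = {{a, b}, {b, c}} \<and> {a, b} \<in> E \<and> {b, c} \<in> E \<and> a \<noteq> c \<and> a \<in> insert v S0 \<and> b \<in> insert v S0 \<and> c \<in> insert v S0"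
    proof
      assume "s = t"
      then show ?thesis using qu e qv q(1) uv(1) unfolding t_def
        by (intro exI[of _ q] exI[of _ u] exI[of _ v]) simp
    next
      assume "s \<in> T"
      then obtain a b c where "s = {{a, b}, {b, c}}" "{a, b} \<in> E" "{b, c} \<in> E" "a \<noteq> c" "a \<in> S0" "b \<in> S0" "c \<in> S0"
        using S0(3) unfolding inside3_def by meson
      then show ?thesis by (intro exI[of _ a] exI[of _ b] exI[of _ c]) simp
    qed
  qed
  have TT': "T \<subseteq> T'" unfolding T'_def by blast
  have H: "\<forall>z\<in>insert v S0. \<exists>q\<in>insert v S0. {z,q}\<in>E \<and> treach E T' z q b1 b2 \<and> treach E T' b1 b2 q z"
  proof (intro ballI)
    fix z assume "z \<in> insert v S0"
    then show "\<exists>q\<in>insert v S0. {z,q}\<in>E \<and> treach E T' z q b1 b2 \<and> treach E T' b1 b2 q z"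
    proof
      assume z: "z = v"
      have tt: "{{v,u},{u,q}} = t" unfolding t_def by (simp only: insert_commute[of v u] insert_commute[of u q]) (rule insert_commute)
      have a1: "treach E T' v u u q" by (rule tr_step[OF tr_refl]) (use q(2) tt in \<open>auto simp: T'_def\<close>)
      have a2: "treach E T' v u b1 b2" using treach_trans[OF treach_mono[OF q(3) TT'] a1] .
      have a3: "treach E T' b1 b2 u v" by (rule tr_step[OF treach_mono[OF q(4) TT']]) (use e in \<open>auto simp: T'_def t_def\<close>)
      show ?thesis using z a2 a3 e uv(1) by (intro bexI[of _ u]) auto
    next
      assume "z \<in> S0"
      then obtain q' where "q' \<in> S0" "{z,q'}\<in>E" "treach E T z q' b1 b2" "treach E T b1 b2 q' z"
        using h by meson
      then show ?thesis using treach_mono[OF _ TT'] by (intro bexI[of _ q']) auto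
    qed
  qed
  then have hub: "hubin E T' (insert v S0) (insert v S0)"
    unfolding hubin_def by (intro exI[of _ b1] exI[of _ b2])
  show ?case using S0(1) uv(2) cS ins fT' hub
    by (intro exI[of _ "insert v S0"] exI[of _ T']) auto
qed

lemma ends_disj:
  assumes "ends E C T1" "ends E D T2" "C \<inter> D = {}"
  shows "T1 \<inter> T2 = {}"
proof (rule ccontr)
  assume "T1 \<inter> T2 \<noteq> {}"
  then obtain t where t: "t \<in> T1" "t \<in> T2" by blast
  obtain a b c where abc: "t = {{a,b},{b,c}}" "a \<noteq> c" "a \<in> C" "c \<in> C"
    using assms(1) t(1) unfolding ends_def by meson
  obtain a' b' c' where abc': "t = {{a',b'},{b',c'}}" "a' \<in> D" "c' \<in> D"
    using assms(2) t(2) unfolding ends_def by meson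
  have na: "a \<noteq> a'" "a \<noteq> c'" "c \<noteq> a'" "c \<noteq> c'" using abc abc' assms(3) by auto
  have "{a,b} \<in> {{a',b'},{b',c'}}" using abc(1) abc'(1) by simp
  then have "a \<in> {a',b'} \<or> a \<in> {b',c'}" by auto
  then have 1: "a = b'" using na by auto
  have "{b,c} \<in> {{a',b'},{b',c'}}" using abc(1) abc'(1) by simp
  then have "c \<in> {a',b'} \<or> c \<in> {b',c'}" by auto
  then have 2: "c = b'" using na by auto
  show False using 1 2 abc(2) by simp
qed

lemma comp_self: "x \<in> S \<Longrightarrow> x \<in> component S R x"
  by (simp add: component_def reach_in_def)

lemma comp_step: "y \<in> component S R x \<Longrightarrow> z \<in> S \<Longrightarrow> R y z \<Longrightarrow> z \<in> component S R x"
  unfolding component_def reach_in_def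
proof -
  assume a: "y \<in> {y \<in> S. (x, y) \<in> {(x, y). x \<in> S \<and> y \<in> S \<and> R x y}\<^sup>*}" "z \<in> S" "R y z"
  then have r1: "(x,y) \<in> {(x, y). x \<in> S \<and> y \<in> S \<and> R x y}\<^sup>*" "y \<in> S" by auto
  have r2: "(y,z) \<in> {(x, y). x \<in> S \<and> y \<in> S \<and> R x y}" using a r1(2) by simp
  from r1(1) r2 have "(x,z) \<in> {(x, y). x \<in> S \<and> y \<in> S \<and> R x y}\<^sup>*" by (rule rtrancl_into_rtrancl)
  then show "z \<in> {y \<in> S. (x, y) \<in> {(x, y). x \<in> S \<and> y \<in> S \<and> R x y}\<^sup>*}" using a by simp
qed

lemma comp_eq:
  assumes sym: "\<And>a b. R a b \<Longrightarrow> R b a"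
    and "z \<in> component S R x" "z \<in> component S R y"
  shows "component S R x = component S R y"
proof -
  let ?r = "{(x, y). x \<in> S \<and> y \<in> S \<and> R x y}"
  have "sym ?r" using sym by (auto intro: symI)
  then have sr: "sym (?r\<^sup>*)" by (rule sym_rtrancl)
  have xz: "(x,z) \<in> ?r\<^sup>*" and yz: "(y,z) \<in> ?r\<^sup>*" using assms(2,3) by (auto simp: component_def reach_in_def)
  have zx: "(z,x) \<in> ?r\<^sup>*" and zy: "(z,y) \<in> ?r\<^sup>*" using xz yz sr by (auto dest: symD)
  have "(x,y) \<in> ?r\<^sup>*" using xz zy by (rule rtrancl_trans)
  moreover have "(y,x) \<in> ?r\<^sup>*" using yz zx by (rule rtrancl_trans)
  ultimately show ?thesis unfolding component_def reach_in_def
    by (auto intro: rtrancl_trans)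
qed

lemma star_case:
  assumes sg: "simple_graph V E" and CV: "C \<subseteq> V" and x: "x \<in> V" "x \<notin> C" and c1: "c1 \<in> C"
    and adjC: "\<And>y. y \<in> C \<Longrightarrow> {y,x} \<in> E"
  shows "\<exists>TC. ends E C TC \<and> finite TC \<and> card TC = card C - 1 \<and> hubin E TC C V"
proof -
  have fC: "finite C" using sg CV unfolding simple_graph_def by (auto intro: finite_subset)
  define f where "f c = {{c1,x},{x,c}}" for c
  define TC where "TC = f ` (C - {c1})"
  have ex: "\<And>y. y \<in> C \<Longrightarrow> {x,y} \<in> E" using adjC by (simp add: insert_commute)
  have inj: "inj_on f (C - {c1})"
  proof (rule inj_onI)
    fix c d assume cd: "c \<in> C - {c1}" "d \<in> C - {c1}" "f c = f d"
    have "{x,c} \<in> f c" unfolding f_def by simp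
    then have m: "{x,c} \<in> f d" using cd(3) by simp
    have "{x,c} = {c1,x} \<or> {x,c} = {x,d}" using m unfolding f_def by (meson insertE singletonD)
    moreover have "{x,c} \<noteq> {c1,x}" using cd(1) x(2) by (auto simp: doubleton_eq_iff)
    ultimately have "{x,c} = {x,d}" by simp
    then show "c = d" using cd x(2) by (auto simp: doubleton_eq_iff)
  qed
  have card: "card TC = card C - 1" unfolding TC_def using card_image[OF inj] c1 fC by simp
  have fin: "finite TC" unfolding TC_def using fC by simp
  have ends: "ends E C TC" unfolding ends_def TC_def
  proof
    fix s assume "s \<in> f ` (C - {c1})"
    then obtain c where c: "c \<in> C" "c \<noteq> c1" "s = f c" by blast
    show "\<exists>a b cc. s = {{a,b},{b,cc}} \<and> {a,b}\<in>E \<and> {b,cc}\<in>E \<and> a\<noteq>cc \<and> a\<in>C \<and> cc\<in>C"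
      using c c1 adjC[OF c1] ex[OF c(1)] unfolding f_def
      by (intro exI[of _ c1] exI[of _ x] exI[of _ c]) auto
  qed
  have H: "\<forall>y\<in>C. \<exists>q\<in>V. {y,q}\<in>E \<and> treach E TC y q x c1 \<and> treach E TC x c1 q y"
  proof
    fix y assume y: "y \<in> C"
    have t1: "y = c1 \<or> {{y,x},{x,c1}} \<in> TC"
    proof (cases "y = c1")
      case False
      then have "f y \<in> TC" using y unfolding TC_def by blast
      moreover have "f y = {{y,x},{x,c1}}" unfolding f_def
        by (simp only: insert_commute[of c1 x] insert_commute[of x y]) (rule insert_commute)
      ultimately show ?thesis by simp
    qed simp
    have a1: "treach E TC y x x c1" by (rule tr_step[OF tr_refl]) (use t1 ex[OF c1] in auto)
    have a2: "treach E TC x c1 c1 x" by (rule tr_step[OF tr_refl]) (use adjC[OF c1] in auto)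
    have t2: "c1 = y \<or> {{c1,x},{x,y}} \<in> TC"
    proof (cases "y = c1")
      case False
      then have "f y \<in> TC" using y unfolding TC_def by blast
      then show ?thesis unfolding f_def by simp
    qed simp
    have a3: "treach E TC x c1 x y" by (rule tr_step[OF a2]) (use t2 ex[OF y] in auto)
    show "\<exists>q\<in>V. {y,q}\<in>E \<and> treach E TC y q x c1 \<and> treach E TC x c1 q y"
      using x(1) adjC[OF y] a1 a3 by (intro bexI[of _ x]) auto
  qed
  have "hubin E TC C V" unfolding hubin_def using H by (intro exI[of _ x] exI[of _ c1])
  then show ?thesis using ends fin card by blast
qed

theorem theorem3:
  fixes V :: "'a set" and E :: "'a set set"
  assumes "simple_graph V E"
    and "connected_on V (adj E)"
    and "card V \<ge> 2"
  shows "\<exists>T. connecting_transition_set V E T \<and> card T = tau V E"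
proof -
  have sg: "simple_graph V E" by fact
  have finV: "finite V" using sg unfolding simple_graph_def by simp
  define F where "F = {C \<in> co_components V E. card C \<ge> 2}"
  define f where "f C = (if connected_on C (adj E) then card C - 2 else card C - 1)" for C :: "'a set"
  have csym: "\<And>a b. coadj E a b \<Longrightarrow> coadj E b a" unfolding coadj_def by (auto simp: insert_commute)
  have ex: "\<forall>C\<in>F. \<exists>TC. ends E C TC \<and> finite TC \<and> card TC = f C \<and> hubin E TC C V"
  proof
    fix C assume "C \<in> F"
    then obtain x0 where x0: "x0 \<in> V" "C = component V (coadj E) x0" and c2: "card C \<ge> 2"
      unfolding F_def co_components_def by blast
    have CV: "C \<subseteq> V" using x0(2) unfolding component_def by blast
    have fC: "finite C" using CV finV by (rule finite_subset)
    have adjC: "{y,z} \<in> E" if "y \<in> C" "z \<in> V" "z \<notin> C" for y z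
    proof (rule ccontr)
      assume "{y,z} \<notin> E"
      moreover have "y \<noteq> z" using that by auto
      ultimately have "coadj E y z" unfolding coadj_def by simp
      then have "z \<in> C" using comp_step[of y V "coadj E" x0 z] that x0(2) by simp
      then show False using that by simp
    qed
    show "\<exists>TC. ends E C TC \<and> finite TC \<and> card TC = f C \<and> hubin E TC C V"
    proof (cases "connected_on C (adj E)")
      case True
      from grow[OF fC True c2 le_refl] obtain S0 T where
        S0: "S0 \<subseteq> C" "card S0 = card C" "inside3 E S0 T" "finite T" "card T = card C - 2" "hubin E T S0 S0"
        by blast
      have "S0 = C" using card_subset_eq[OF fC S0(1) S0(2)] .
      then have "ends E C T" "hubin E T C V" using S0(3,6) CV inside3_ends hubin_mono by auto
      then show ?thesis using S0(4,5) True unfolding f_def by auto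
    next
      case False
      have "C \<noteq> V" using False assms(2) by auto
      then obtain x where x: "x \<in> V" "x \<notin> C" using CV by blast
      have "C \<noteq> {}" using c2 by auto
      then obtain c1 where c1: "c1 \<in> C" by blast
      have "\<And>y. y \<in> C \<Longrightarrow> {y,x} \<in> E" using adjC x by blast
      from star_case[OF sg CV x c1 this] show ?thesis using False unfolding f_def by auto
    qed
  qed
  then obtain g where g: "\<And>C. C \<in> F \<Longrightarrow> ends E C (g C) \<and> finite (g C) \<and> card (g C) = f C \<and> hubin E (g C) C V"
    by metis
  have gE: "\<And>C. C \<in> F \<Longrightarrow> ends E C (g C)" and gF: "\<And>C. C \<in> F \<Longrightarrow> finite (g C)"
    and gC: "\<And>C. C \<in> F \<Longrightarrow> card (g C) = f C" and gH: "\<And>C. C \<in> F \<Longrightarrow> hubin E (g C) C V"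
    using g by simp_all
  define T where "T = \<Union>(g ` F)"
  have finF: "finite F" unfolding F_def co_components_def using finV by simp
  have disj: "g C \<inter> g D = {}" if hCD: "C \<in> F" "D \<in> F" "C \<noteq> D" for C D
  proof -
    obtain x where x: "C = component V (coadj E) x" using hCD(1) unfolding F_def co_components_def by blast
    obtain y where y: "D = component V (coadj E) y" using hCD(2) unfolding F_def co_components_def by blast
    have "C \<inter> D = {}"
    proof (rule ccontr)
      assume "C \<inter> D \<noteq> {}"
      then obtain z where "z \<in> C" "z \<in> D" by blast
      then have "C = D" using comp_eq[of "coadj E" z V x y, OF csym] x y by simp
      then show False using hCD(3) by simp
    qed
    then show ?thesis by (rule ends_disj[OF gE[OF hCD(1)] gE[OF hCD(2)]])
  qed
  have "card T = (\<Sum>C\<in>F. card (g C))"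
    unfolding T_def by (rule card_UN_disjoint[OF finF]) (use gF disj in auto)
  also have "\<dots> = (\<Sum>C\<in>F. f C)" using gC by (intro sum.cong) auto
  also have "\<dots> = tau V E" unfolding tau_def F_def f_def by simp
  finally have cardT: "card T = tau V E" .
  have sub: "T \<subseteq> transitions E" unfolding T_def
  proof (rule UN_least)
    fix C assume "C \<in> F"
    then show "g C \<subseteq> transitions E" by (rule ends_trans[OF gE])
  qed
  have conn: "T_connected V E T"
    unfolding T_connected_def
  proof (intro ballI)
    fix u v assume u: "u \<in> V" and v: "v \<in> V"
    show "\<exists>w. is_walk E w \<and> T_compatible T w \<and> hd w = u \<and> last w = v"
    proof (cases "u = v")
      case True
      then show ?thesis by (intro exI[of _ "[u]"]) (auto simp: is_walk_def T_compatible_def)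
    next
      case False
      show ?thesis
      proof (cases "{u,v} \<in> E")
        case True
        then show ?thesis by (intro exI[of _ "[u,v]"]) (auto simp: is_walk_def T_compatible_def less_Suc_eq)
      next
        case False
        then have cuv: "coadj E u v" using \<open>u \<noteq> v\<close> unfolding coadj_def by simp
        define C where "C = component V (coadj E) u"
        have uC: "u \<in> C" unfolding C_def using comp_self[OF u] .
        have vC: "v \<in> C" unfolding C_def using comp_step[of u V "coadj E" u v, OF comp_self[OF u] v cuv] .
        have CV: "C \<subseteq> V" unfolding C_def component_def by blast
        have "card {u,v} \<le> card C" using uC vC CV finV by (intro card_mono) (auto intro: finite_subset)
        then have "card C \<ge> 2" using \<open>u \<noteq> v\<close> by simp
        then have CF: "C \<in> F" unfolding F_def co_components_def C_def using u by blast
        have "g C \<subseteq> T" unfolding T_def using CF by (rule UN_upper)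
        then show ?thesis by (rule hub_walk[OF gH[OF CF] uC vC])
      qed
    qed
  qed
  show ?thesis using sub conn cardT unfolding connecting_transition_set_def by blast
qed

end
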